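(* Let $A$ be a $0$-$1$ matrix over a set $\mathcal G$ with no identically zero rows, and let $L_\alpha$, $\psi$ and $j$ be as in the context. If $f\in\bigoplus_{x\in\mathcal G}C(\Delta_x;\mathbb Z)$ satisfies $L_\alpha f\in\psi(\tilde{\mathfrak R}_A)$, then $f\in j\big(\bigoplus_{x\in\mathcal G}\mathbb Z\big)$.
   Context: $\mathbb F$ is the free group on $\mathcal G$, $\mathbb F^+$ the unital subsemigroup generated by $\mathcal G$. $\Omega_A^\tau$ is the set of $\xi\subset\mathbb F$ such that $e\in\xi$, $\xi$ is convex (contains the shortest path between any two of its elements), for each $\omega\in\xi$ there is at most one $y\in\mathcal G$ with $\omega y\in\xi$, and if $\omega,\omega y\in\xi$ ($y\in\mathcal G$) then for $x\in\mathcal G$: $\omega x^{-1}\in\xi\iff A(x,y)=1$. With the product topology on subsets of $\mathbb F$, $\widetilde\Omega_A$ is the closure in $\Omega_A^\tau$ of the elements with no upper bound for the order $s\le t\iff s^{-1}t\in\mathbb F^+$. $\Delta_t=\{\xi\in\widetilde\Omega_A:t\in\xi\}$ (clopen). $L_\alpha:\bigoplus_{x\in\mathcal G}C(\Delta_x,\mathbb Z)\to C(\widetilde\Omega_A,\mathbb Z)$ is $L_\alpha f=\sum_x\big(f_x-\alpha_x^{-1}(f_x)\big)$, where $f_x$ is extended by $0$ off $\Delta_x$ and $\alpha_x^{-1}(f_x)(\xi)=f_x(x\xi)$ for $\xi\in\Delta_{x^{-1}}$, $0$ otherwise. $j:\bigoplus_{x\in\mathcal G}\mathbb Z\to\bigoplus_{x\in\mathcal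 G}C(\Delta_x;\mathbb Z)$ sends the $x$-th basis element to the characteristic function $1_{\Delta_x}$ in the $x$-th summand. $\rho_i(j)=A(i,j)$, $\delta_i=$ indicator of $\{i\}$; $\tilde R_A\subset\ell^\infty(\mathcal G)$ is the $C^*$-algebra generated by $\mathbf 1$ and all $\rho_i,\delta_i$; $\tilde{\mathfrak R}_A\subset\mathbb Z^{\mathcal G}$ is the ring generated by $\mathbf 1$ and all $\delta_i,\rho_i$. $\tilde{\mathcal G}=\mathcal G\cup\{\star\}$; $c_j(i)=A(i,j)$; $\tilde\Gamma_A$ is the closure of $\{(j,c_j)\}$ in $\tilde{\mathcal G}\times\{0,1\}^{\mathcal G}$; each $f\in\tilde R_A$ has a unique continuous extension $\hat f$ to $\tilde\Gamma_A$ (identifying $j$ with $(j,c_j)$). For $\xi\in\widetilde\Omega_A$, $R_\xi(e)=\{x\in\mathcal G:x^{-1}\in\xi\}$ and $\sigma(\xi)_1$ is the unique element of $\xi\cap\mathcal G$, or $\star$ if empty. $\psi:\tilde R_A\to C(\widetilde\Omega_A)$ is $\psi(f)(\xi)=\hat f(\sigma(\xi)_1,R_\xi(e))$; it is an injective unital $*$-homomorphism with $\psi(\delta_i)=1_{\Delta_i}$ and $\psi(\rho_i)=1_{\Delta_{i^{-1}}}$. *)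

theory Defs
  imports Main
begin

text \<open>A letter (x, True) stands for the generator x, (x, False) for its inverse.\<close>
type_synonym 'g word = "('g \<times> bool) list"

fun reduced :: "'g word \<Rightarrow> bool" where
  "reduced [] = True"
| "reduced [a] = True"
| "reduced (a # b # w) = (\<not> (fst a = fst b \<and> snd a \<noteq> snd b) \<and> reduced (b # w))"

definition inv_letter :: "'g \<times> bool \<Rightarrow> 'g \<times> bool" where
  "inv_letter a = (fst a, \<not> snd a)"

definition mult1 :: "'g word \<Rightarrow> 'g \<times> bool \<Rightarrow> 'g word" where
  "mult1 w a = (if w \<noteq> [] \<and> last w = inv_letter a then butlast w else w @ [a])"

definition fmult :: "'g word \<Rightarrow> 'g word \<Rightarrow> 'g word" where
  "fmult u v = foldl mult1 u v"

definition finv :: "'g word \<Rightarrow> 'g word" where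
  "finv w = rev (map inv_letter w)"

definition FG :: "'g word set" where
  "FG = {w. reduced w}"

definition FPlus :: "'g word set" where
  "FPlus = {w. reduced w \<and> (\<forall>a\<in>set w. snd a)}"

definition gen :: "'g \<Rightarrow> 'g word" where
  "gen x = [(x, True)]"

definition geninv :: "'g \<Rightarrow> 'g word" where
  "geninv x = [(x, False)]"

definition fle :: "'g word \<Rightarrow> 'g word \<Rightarrow> bool" where
  "fle s t \<longleftrightarrow> fmult (finv s) t \<in> FPlus"

text \<open>Convexity: for \<omega>, \<nu> in \<xi>, the shortest path from \<omega> to \<nu> in the Cayley tree,
  i.e. the elements \<omega> p with p a prefix of the reduced word \<omega>^-1 \<nu>, lies in \<xi>.\<close>
definition convex :: "'g word set \<Rightarrow> bool" where
  "convex \<xi> \<longleftrightarrow> (\<forall>\<omega>\<in>\<xi>. \<forall>\<nu>\<in>\<xi>. \<forall>k. fmult \<omega> (take k (fmult (finv \<omega>) \<nu>)) \<in> \<xi>)"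

definition OmegaTau :: "('g \<Rightarrow> 'g \<Rightarrow> bool) \<Rightarrow> 'g word set set" where
  "OmegaTau A = {\<xi>. \<xi> \<subseteq> FG \<and> [] \<in> \<xi> \<and> convex \<xi>
     \<and> (\<forall>\<omega>\<in>\<xi>. \<forall>y z. fmult \<omega> (gen y) \<in> \<xi> \<and> fmult \<omega> (gen z) \<in> \<xi> \<longrightarrow> y = z)
     \<and> (\<forall>\<omega>\<in>\<xi>. \<forall>y. fmult \<omega> (gen y) \<in> \<xi> \<longrightarrow>
           (\<forall>x. fmult \<omega> (geninv x) \<in> \<xi> \<longleftrightarrow> A x y))}"

definition no_upper_bound :: "'g word set \<Rightarrow> bool" where
  "no_upper_bound \<xi> \<longleftrightarrow> \<not> (\<exists>t\<in>FG. \<forall>s\<in>\<xi>. fle s t)"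

text \<open>Closure in OmegaTau A for the product topology on subsets of F (= {0,1}^F):
  \<xi> is in the closure of S iff every basic neighbourhood of \<xi>, given by a finite set of
  coordinates F0, meets S.\<close>
definition OmegaT :: "('g \<Rightarrow> 'g \<Rightarrow> bool) \<Rightarrow> 'g word set set" where
  "OmegaT A = {\<xi> \<in> OmegaTau A. \<forall>F0. finite F0 \<longrightarrow>
      (\<exists>\<eta>\<in>OmegaTau A. no_upper_bound \<eta> \<and> \<eta> \<inter> F0 = \<xi> \<inter> F0)}"

definition Delta :: "('g \<Rightarrow> 'g \<Rightarrow> bool) \<Rightarrow> 'g word \<Rightarrow> 'g word set set" where
  "Delta A t = {\<xi> \<in> OmegaT A. t \<in> \<xi>}"

text \<open>Continuity of an integer-valued function (Z discrete) on a subspace D of {0,1}^F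
  with the product topology.\<close>
definition cont_Z :: "'g word set set \<Rightarrow> ('g word set \<Rightarrow> int) \<Rightarrow> bool" where
  "cont_Z D h \<longleftrightarrow> (\<forall>\<xi>\<in>D. \<exists>F0. finite F0 \<and> (\<forall>\<eta>\<in>D. \<eta> \<inter> F0 = \<xi> \<inter> F0 \<longrightarrow> h \<eta> = h \<xi>))"

text \<open>An element of the direct sum is a family f with f x :: C(Delta_x, Z); only the values
  of f x on Delta_(gen x) are relevant. Finitely many components are nonzero.\<close>
definition dsum_support :: "('g \<Rightarrow> 'g \<Rightarrow> bool) \<Rightarrow> ('g \<Rightarrow> 'g word set \<Rightarrow> int) \<Rightarrow> 'g set" where
  "dsum_support A f = {x. \<exists>\<xi>\<in>Delta A (gen x). f x \<xi> \<noteq> 0}"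

definition in_dsum :: "('g \<Rightarrow> 'g \<Rightarrow> bool) \<Rightarrow> ('g \<Rightarrow> 'g word set \<Rightarrow> int) \<Rightarrow> bool" where
  "in_dsum A f \<longleftrightarrow> (\<forall>x. cont_Z (Delta A (gen x)) (f x)) \<and> finite (dsum_support A f)"

definition ext0 :: "('g \<Rightarrow> 'g \<Rightarrow> bool) \<Rightarrow> ('g \<Rightarrow> 'g word set \<Rightarrow> int) \<Rightarrow> 'g \<Rightarrow> 'g word set \<Rightarrow> int" where
  "ext0 A f x \<xi> = (if \<xi> \<in> Delta A (gen x) then f x \<xi> else 0)"

definition alpha_inv :: "('g \<Rightarrow> 'g \<Rightarrow> bool) \<Rightarrow> ('g \<Rightarrow> 'g word set \<Rightarrow> int) \<Rightarrow> 'g \<Rightarrow> 'g word set \<Rightarrow> int" where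
  "alpha_inv A f x \<xi> = (if \<xi> \<in> Delta A (geninv x) then f x (fmult (gen x) ` \<xi>) else 0)"

definition L_alpha :: "('g \<Rightarrow> 'g \<Rightarrow> bool) \<Rightarrow> ('g \<Rightarrow> 'g word set \<Rightarrow> int) \<Rightarrow> 'g word set \<Rightarrow> int" where
  "L_alpha A f \<xi> = (\<Sum>x\<in>dsum_support A f. ext0 A f x \<xi> - alpha_inv A f x \<xi>)"

definition in_image_j :: "('g \<Rightarrow> 'g \<Rightarrow> bool) \<Rightarrow> ('g \<Rightarrow> 'g word set \<Rightarrow> int) \<Rightarrow> bool" where
  "in_image_j A f \<longleftrightarrow> (\<exists>n :: 'g \<Rightarrow> int. finite {x. n x \<noteq> 0} \<and>
      (\<forall>x. \<forall>\<xi>\<in>Delta A (gen x). f x \<xi> = n x))"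

inductive_set RingA :: "('g \<Rightarrow> 'g \<Rightarrow> bool) \<Rightarrow> ('g \<Rightarrow> int) set" for A where
  one: "(\<lambda>_. 1) \<in> RingA A"
| delta: "(\<lambda>j. of_bool (j = i)) \<in> RingA A"
| rho: "(\<lambda>j. of_bool (A i j)) \<in> RingA A"
| add: "f \<in> RingA A \<Longrightarrow> g \<in> RingA A \<Longrightarrow> (\<lambda>j. f j + g j) \<in> RingA A"
| neg: "f \<in> RingA A \<Longrightarrow> (\<lambda>j. - f j) \<in> RingA A"
| mult: "f \<in> RingA A \<Longrightarrow> g \<in> RingA A \<Longrightarrow> (\<lambda>j. f j * g j) \<in> RingA A"

text \<open>Continuous extension hat f to tilde Gamma_A, for integer valued f. Points of
  tilde G = G \<union> {star} are 'g option (None = star); tilde G carries the topology in which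
  the points of G are isolated and the neighbourhoods of star are the cofinite sets
  (one-point compactification of discrete G); {0,1}^G carries the product topology
  (subsets c of G, basic neighbourhoods given by finite coordinate sets F0).
  Since f is Z-valued, hat f (t, c) is the value v that f takes on all j such that
  (j, c_j) lies in a suitable neighbourhood of (t, c), where c_j = {i. A i j}.\<close>
definition hat :: "('g \<Rightarrow> 'g \<Rightarrow> bool) \<Rightarrow> ('g \<Rightarrow> int) \<Rightarrow> 'g option \<Rightarrow> 'g set \<Rightarrow> int" where
  "hat A f t c = (THE v. \<exists>F0 N. finite F0 \<and> finite N \<and>
      (\<forall>j. (case t of Some i \<Rightarrow> j = i | None \<Rightarrow> j \<notin> N)
            \<and> (\<forall>i\<in>F0. A i j \<longleftrightarrow> i \<in> c) \<longrightarrow> f j = v))"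

definition sigma1 :: "'g word set \<Rightarrow> 'g option" where
  "sigma1 \<xi> = (if \<exists>x. gen x \<in> \<xi> then Some (THE x. gen x \<in> \<xi>) else None)"

definition R_e :: "'g word set \<Rightarrow> 'g set" where
  "R_e \<xi> = {x. geninv x \<in> \<xi>}"

definition psi :: "('g \<Rightarrow> 'g \<Rightarrow> bool) \<Rightarrow> ('g \<Rightarrow> int) \<Rightarrow> 'g word set \<Rightarrow> int" where
  "psi A f \<xi> = hat A f (sigma1 \<xi>) (R_e \<xi>)"

end

theory Submission
  imports Defs "HOL-Analysis.Function_Topology"
begin

definition closed_cyl :: "('w set \<Rightarrow> bool) \<Rightarrow> bool" where
  "closed_cyl P \<longleftrightarrow> (\<forall>\<xi>. \<not> P \<xi> \<longrightarrow> (\<exists>F0. finite F0 \<and> (\<forall>\<eta>. \<eta> \<inter> F0 = \<xi> \<inter> F0 \<longrightarrow> \<not> P \<eta>)))"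

lemma cyl_open:
  fixes h :: "'w \<Rightarrow> bool"
  assumes "finite F0"
  shows "openin (product_topology (\<lambda>_. discrete_topology (UNIV::bool set)) (UNIV::'w set))
           {h'. \<forall>w\<in>F0. h' w = h w}"
proof -
  have eq: "{h'. \<forall>w\<in>F0. h' w = h w} = PiE UNIV (\<lambda>w. if w \<in> F0 then {h w} else UNIV)"
    by (auto simp: PiE_def extensional_def Pi_def)
  have "{i. (if i \<in> F0 then {h i} else UNIV) \<noteq> (UNIV::bool set)} \<subseteq> F0" by auto
  then have "finite {i \<in> UNIV. (if i \<in> F0 then {h i} else UNIV) \<noteq> topspace (discrete_topology (UNIV::bool set))}"
    using assms finite_subset by auto
  then show ?thesis unfolding eq by (subst openin_PiE_gen) auto
qed

lemma compact_unif:
  fixes K :: "'g word set set" and h :: "'g word set \<Rightarrow> int"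
  assumes cl: "closed_cyl (\<lambda>\<xi>. \<xi> \<in> K)" and ct: "cont_Z K h"
  shows "\<exists>F. finite F \<and> (\<forall>\<xi>\<in>K. \<forall>\<xi>'\<in>K. \<xi> \<inter> F = \<xi>' \<inter> F \<longrightarrow> h \<xi> = h \<xi>')"
proof -
  let ?X = "product_topology (\<lambda>_. discrete_topology (UNIV::bool set)) (UNIV::'g word set)"
  define KK where "KK = (\<lambda>\<xi> w. w \<in> \<xi>) ` K"
  have top: "topspace ?X = UNIV" by auto
  have cs: "compact_space ?X"
    by (simp add: compact_space_product_topology compact_space_discrete_topology)
  have "openin ?X (UNIV - KK)"
  proof (subst openin_subopen, intro ballI)
    fix g assume "g \<in> UNIV - KK"
    then have "Collect g \<notin> K" unfolding KK_def by (auto simp: image_iff)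
    then obtain F0 where F0: "finite F0" "\<And>\<eta>. \<eta> \<inter> F0 = Collect g \<inter> F0 \<Longrightarrow> \<eta> \<notin> K"
      using cl unfolding closed_cyl_def by blast
    show "\<exists>T. openin ?X T \<and> g \<in> T \<and> T \<subseteq> UNIV - KK"
    proof (intro exI conjI)
      show "openin ?X {h'. \<forall>w\<in>F0. h' w = g w}" by (rule cyl_open[OF F0(1)])
      show "g \<in> {h'. \<forall>w\<in>F0. h' w = g w}" by simp
      show "{h'. \<forall>w\<in>F0. h' w = g w} \<subseteq> UNIV - KK"
      proof
        fix h' assume h': "h' \<in> {h'. \<forall>w\<in>F0. h' w = g w}"
        have "h' \<notin> KK"
        proof
          assume "h' \<in> KK"
          then obtain \<eta> where "\<eta> \<in> K" "h' = (\<lambda>w. w \<in> \<eta>)" unfolding KK_def by auto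
          moreover have "\<eta> \<inter> F0 = Collect g \<inter> F0" using h' calculation by auto
          ultimately show False using F0(2) by blast
        qed
        then show "h' \<in> UNIV - KK" by simp
      qed
    qed
  qed
  then have "closedin ?X KK" by (simp add: closedin_def)
  then have comp: "compactin ?X KK" using cs closedin_compact_space by blast
  obtain F0 where F0: "\<And>\<xi>. \<xi> \<in> K \<Longrightarrow> finite (F0 \<xi>) \<and> (\<forall>\<eta>\<in>K. \<eta> \<inter> F0 \<xi> = \<xi> \<inter> F0 \<xi> \<longrightarrow> h \<eta> = h \<xi>)"
    using ct unfolding cont_Z_def by metis
  define cyl where "cyl \<xi> = {h'. \<forall>w\<in>F0 \<xi>. h' w = (w \<in> \<xi>)}" for \<xi>
  have "\<forall>u\<in>cyl ` K. openin ?X u"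
    using F0 cyl_open unfolding cyl_def by fastforce
  moreover have "KK \<subseteq> \<Union> (cyl ` K)"
    unfolding KK_def cyl_def by auto
  ultimately obtain FF where FF: "finite FF" "FF \<subseteq> cyl ` K" "KK \<subseteq> \<Union> FF"
    using comp unfolding compactin_def by meson
  then obtain \<Xi> where Xi: "\<Xi> \<subseteq> K" "finite \<Xi>" "FF = cyl ` \<Xi>"
    by (meson finite_subset_image)
  define F where "F = \<Union> (F0 ` \<Xi>)"
  have fF: "finite F" unfolding F_def using Xi F0 by auto
  show ?thesis
  proof (intro exI conjI ballI impI)
    show "finite F" by fact
    fix \<xi> \<xi>' assume x: "\<xi> \<in> K" "\<xi>' \<in> K" and ag: "\<xi> \<inter> F = \<xi>' \<inter> F"
    have "(\<lambda>w. w \<in> \<xi>) \<in> KK" using x unfolding KK_def by auto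
    then obtain \<zeta> where z: "\<zeta> \<in> \<Xi>" "(\<lambda>w. w \<in> \<xi>) \<in> cyl \<zeta>" using FF Xi by auto
    have zK: "\<zeta> \<in> K" using z Xi by auto
    have sub: "F0 \<zeta> \<subseteq> F" unfolding F_def using z by auto
    have a1: "\<xi> \<inter> F0 \<zeta> = \<zeta> \<inter> F0 \<zeta>" using z(2) unfolding cyl_def by auto
    have a2: "\<xi>' \<inter> F0 \<zeta> = \<zeta> \<inter> F0 \<zeta>" using a1 ag sub by blast
    show "h \<xi> = h \<xi>'" using F0[OF zK] x a1 a2 by metis
  qed
qed



lemma inv_letter_inv[simp]: "inv_letter (inv_letter a) = a"
  by (simp add: inv_letter_def)

lemma inv_letter_neq[simp]: "inv_letter a \<noteq> a" "a \<noteq> inv_letter a"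
  by (auto simp: inv_letter_def prod_eq_iff)

lemma reduced_Cons: "reduced (a # w) \<longleftrightarrow> reduced w \<and> (w = [] \<or> hd w \<noteq> inv_letter a)"
  by (cases w) (auto simp: inv_letter_def prod_eq_iff)

lemma reduced_append:
  "reduced (u @ v) \<longleftrightarrow> reduced u \<and> reduced v \<and> (u = [] \<or> v = [] \<or> last u \<noteq> inv_letter (hd v))"
proof (induction u)
  case Nil then show ?case by simp
next
  case (Cons a u)
  show ?case
  proof (cases u)
    case Nil then show ?thesis by (cases v) (auto simp: reduced_Cons inv_letter_def prod_eq_iff)
  next
    case (Cons b u')
    then show ?thesis using Cons.IH by (auto simp: reduced_Cons)
  qed
qed

lemma reduced_snoc: "reduced (w @ [a]) \<longleftrightarrow> reduced w \<and> (w = [] \<or> last w \<noteq> inv_letter a)"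
  by (simp add: reduced_append)

lemma reduced_butlast: "reduced w \<Longrightarrow> reduced (butlast w)"
  by (cases w rule: rev_cases) (auto simp: reduced_append)

lemma mult1_reduced: "reduced w \<Longrightarrow> reduced (mult1 w a)"
  by (auto simp: mult1_def reduced_butlast reduced_snoc)

lemma foldl_reduced: "reduced u \<Longrightarrow> reduced (foldl mult1 u v)"
  by (induction v arbitrary: u) (auto simp: mult1_reduced)

lemma fmult_reduced: "reduced u \<Longrightarrow> reduced (fmult u v)"
  by (simp add: fmult_def foldl_reduced)

lemma foldl_noncancel: "reduced (u @ v) \<Longrightarrow> foldl mult1 u v = u @ v"
proof (induction v arbitrary: u)
  case Nil then show ?case by simp
next
  case (Cons b v)
  have r: "reduced ((u @ [b]) @ v)" using Cons.prems by simp
  have "mult1 u b = u @ [b]"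
    using Cons.prems by (auto simp: mult1_def reduced_append)
  then show ?case using Cons.IH[OF r] by simp
qed

lemma fmult_Nil_left[simp]: "reduced v \<Longrightarrow> fmult [] v = v"
  by (simp add: fmult_def foldl_noncancel)

lemma fmult_Nil_right[simp]: "fmult u [] = u"
  by (simp add: fmult_def)

lemma mult1_cancel: "reduced u \<Longrightarrow> mult1 (mult1 u a) (inv_letter a) = u"
proof (cases "u \<noteq> [] \<and> last u = inv_letter a")
  case True
  assume r: "reduced u"
  then obtain u' where u: "u = u' @ [inv_letter a]" using True
    by (metis append_butlast_last_id)
  have "u' = [] \<or> last u' \<noteq> a" using r u by (simp add: reduced_snoc)
  then show ?thesis using True u by (auto simp: mult1_def)
next
  case False
  then show ?thesis by (auto simp: mult1_def)
qed

lemma foldl_assoc_aux: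
  "reduced u \<Longrightarrow> foldl mult1 u (foldl mult1 v w) = foldl mult1 u (v @ w)"
proof (induction w arbitrary: u rule: rev_induct)
  case Nil then show ?case by simp
next
  case (snoc a w)
  define r where "r = foldl mult1 v w"
  show ?case
  proof (cases "r \<noteq> [] \<and> last r = inv_letter a")
    case True
    then obtain r' where r': "r = r' @ [inv_letter a]" by (metis append_butlast_last_id)
    have m: "mult1 r a = r'" using True r' by (simp add: mult1_def)
    have red: "reduced (foldl mult1 u r')" using snoc.prems foldl_reduced by blast
    have "foldl mult1 u (v @ w @ [a]) = mult1 (foldl mult1 u (v @ w)) a" by simp
    also have "\<dots> = mult1 (foldl mult1 u r) a" using snoc.IH[OF snoc.prems] r_def by simp
    also have "\<dots> = mult1 (mult1 (foldl mult1 u r') (inv_letter a)) (inv_letter (inv_letter a))"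
      using r' by simp
    also have "\<dots> = foldl mult1 u r'" using mult1_cancel[OF red, of "inv_letter a"] by simp
    finally show ?thesis using m r_def by simp
  next
    case False
    then have m: "mult1 r a = r @ [a]" by (auto simp: mult1_def)
    have "foldl mult1 u (v @ w @ [a]) = mult1 (foldl mult1 u (v @ w)) a" by simp
    also have "\<dots> = mult1 (foldl mult1 u r) a" using snoc.IH[OF snoc.prems] r_def by simp
    finally show ?thesis using m r_def by simp
  qed
qed

lemma fmult_assoc: "reduced u \<Longrightarrow> fmult (fmult u v) w = fmult u (fmult v w)"
  by (simp add: fmult_def foldl_assoc_aux)

lemma finv_Nil[simp]: "finv [] = []"
  by (simp add: finv_def)

lemma finv_snoc: "finv (u @ [a]) = inv_letter a # finv u"
  by (simp add: finv_def)

lemma finv_Cons: "finv (a # u) = finv u @ [inv_letter a]"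
  by (simp add: finv_def)

lemma finv_finv[simp]: "finv (finv u) = u"
  by (simp add: finv_def rev_map comp_def)

lemma fmult_finv_right[simp]: "fmult u (finv u) = []"
proof (induction u rule: rev_induct)
  case Nil then show ?case by (simp add: fmult_def)
next
  case (snoc a u)
  have "mult1 (u @ [a]) (inv_letter a) = u" by (simp add: mult1_def)
  then show ?case using snoc by (simp add: fmult_def finv_snoc)
qed

lemma fmult_finv_left[simp]: "fmult (finv u) u = []"
  using fmult_finv_right[of "finv u"] by simp

lemma finv_reduced: "reduced u \<Longrightarrow> reduced (finv u)"
proof (induction u)
  case Nil then show ?case by (simp add: finv_def)
next
  case (Cons a u)
  have "reduced u" "u = [] \<or> hd u \<noteq> inv_letter a" using Cons.prems by (auto simp: reduced_Cons)
  moreover have "u \<noteq> [] \<Longrightarrow> last (finv u) = inv_letter (hd u)"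
    by (simp add: finv_def last_rev hd_map)
  ultimately show ?case using Cons.IH
    by (auto simp: finv_Cons reduced_snoc inv_letter_def prod_eq_iff finv_def)
qed

lemma cancel_left1: "reduced t \<Longrightarrow> reduced X \<Longrightarrow> fmult (finv t) (fmult t X) = X"
  by (metis finv_reduced fmult_assoc fmult_finv_left fmult_Nil_left)

lemma cancel_left2: "reduced t \<Longrightarrow> reduced X \<Longrightarrow> fmult t (fmult (finv t) X) = X"
  by (metis fmult_assoc fmult_finv_right fmult_Nil_left)

lemma inv_unique: "reduced a \<Longrightarrow> reduced b \<Longrightarrow> fmult a b = [] \<Longrightarrow> b = finv a"
  by (metis cancel_left1 fmult_Nil_right)

lemma finv_fmult: "reduced u \<Longrightarrow> reduced v \<Longrightarrow> finv (fmult u v) = fmult (finv v) (finv u)"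
proof -
  assume u: "reduced u" and v: "reduced v"
  have "fmult (fmult u v) (fmult (finv v) (finv u)) = fmult u (fmult v (fmult (finv v) (finv u)))"
    using u fmult_assoc by blast
  also have "\<dots> = []" using cancel_left2[OF v finv_reduced[OF u]] by simp
  finally show ?thesis
    using inv_unique[OF fmult_reduced[OF u] fmult_reduced[OF finv_reduced[OF v]]] by simp
qed

lemma fmult_single: "reduced w \<Longrightarrow>
   fmult [a] w = (if w \<noteq> [] \<and> hd w = inv_letter a then tl w else a # w)"
proof (cases w)
  case Nil then show ?thesis by (simp add: fmult_def)
next
  case (Cons b w')
  assume r: "reduced w"
  show ?thesis
  proof (cases "b = inv_letter a")
    case True
    then have "fmult [a] w = foldl mult1 [] w'" using Cons by (simp add: fmult_def mult1_def)
    also have "\<dots> = w'" using r Cons by (simp add: foldl_noncancel reduced_Cons)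
    finally show ?thesis using Cons True by simp
  next
    case False
    have "reduced ([a] @ w)" using r Cons False by (simp add: reduced_Cons)
    then have "foldl mult1 [a] w = [a] @ w" by (rule foldl_noncancel)
    then show ?thesis using Cons False by (simp add: fmult_def)
  qed
qed

lemma fmult_snoc1: "fmult w [a] = mult1 w a"
  by (simp add: fmult_def)

lemma mem_tr:
  assumes "reduced t" "\<xi> \<subseteq> FG"
  shows "w \<in> fmult t ` \<xi> \<longleftrightarrow> reduced w \<and> fmult (finv t) w \<in> \<xi>"
proof
  assume "w \<in> fmult t ` \<xi>"
  then obtain v where v: "v \<in> \<xi>" "w = fmult t v" by auto
  have "reduced v" using v assms by (auto simp: FG_def)
  then have "fmult (finv t) w = v" using v cancel_left1[OF assms(1)] by simp
  then show "reduced w \<and> fmult (finv t) w \<in> \<xi>"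
    using v assms fmult_reduced by auto
next
  assume "reduced w \<and> fmult (finv t) w \<in> \<xi>"
  then show "w \<in> fmult t ` \<xi>"
    using cancel_left2[OF assms(1)] by (metis image_eqI)
qed



lemma OmegaTau_iff: "\<xi> \<in> OmegaTau A \<longleftrightarrow> \<xi> \<subseteq> FG \<and> [] \<in> \<xi> \<and> convex \<xi>
     \<and> (\<forall>\<omega>\<in>\<xi>. \<forall>y z. fmult \<omega> (gen y) \<in> \<xi> \<and> fmult \<omega> (gen z) \<in> \<xi> \<longrightarrow> y = z)
     \<and> (\<forall>\<omega>\<in>\<xi>. \<forall>y. fmult \<omega> (gen y) \<in> \<xi> \<longrightarrow>
           (\<forall>x. fmult \<omega> (geninv x) \<in> \<xi> \<longleftrightarrow> A x y))"
  by (simp add: OmegaTau_def)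

lemma OT_sub: "\<xi> \<in> OmegaTau A \<Longrightarrow> w \<in> \<xi> \<Longrightarrow> reduced w"
  by (auto simp: OmegaTau_iff FG_def)

lemma OT_Nil: "\<xi> \<in> OmegaTau A \<Longrightarrow> [] \<in> \<xi>"
  by (auto simp: OmegaTau_iff)

lemma OT_uniq: "\<xi> \<in> OmegaTau A \<Longrightarrow> \<omega> \<in> \<xi> \<Longrightarrow> fmult \<omega> (gen y) \<in> \<xi> \<Longrightarrow> fmult \<omega> (gen z) \<in> \<xi> \<Longrightarrow> y = z"
  unfolding OmegaTau_iff by blast

lemma OT_A: "\<xi> \<in> OmegaTau A \<Longrightarrow> \<omega> \<in> \<xi> \<Longrightarrow> fmult \<omega> (gen y) \<in> \<xi> \<Longrightarrow>
   fmult \<omega> (geninv x) \<in> \<xi> \<longleftrightarrow> A x y"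
  unfolding OmegaTau_iff by blast

lemma reduced_take: "reduced w \<Longrightarrow> reduced (take k w)"
  using reduced_append[of "take k w" "drop k w"] by simp

lemma OT_prefix: "\<xi> \<in> OmegaTau A \<Longrightarrow> \<nu> \<in> \<xi> \<Longrightarrow> take k \<nu> \<in> \<xi>"
proof -
  assume O: "\<xi> \<in> OmegaTau A" and n: "\<nu> \<in> \<xi>"
  have r: "reduced \<nu>" using OT_sub[OF O n] .
  have "convex \<xi>" "[] \<in> \<xi>" using O by (auto simp: OmegaTau_iff)
  then have "fmult [] (take k (fmult (finv []) \<nu>)) \<in> \<xi>" using n unfolding convex_def by blast
  then show ?thesis using r reduced_take[OF r] by simp
qed

lemma OT_prefix_append: "\<xi> \<in> OmegaTau A \<Longrightarrow> u @ v \<in> \<xi> \<Longrightarrow> u \<in> \<xi>"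
  using OT_prefix[of \<xi> A "u @ v" "length u"] by simp

lemma OT_butlast: "\<xi> \<in> OmegaTau A \<Longrightarrow> \<nu> \<in> \<xi> \<Longrightarrow> butlast \<nu> \<in> \<xi>"
  by (metis OT_prefix butlast_conv_take)

lemma finv_gen[simp]: "finv (gen z) = geninv z"
  by (simp add: finv_def gen_def geninv_def inv_letter_def)

lemma reduced_gen[simp]: "reduced (gen z)" "reduced (geninv z)"
  by (auto simp: gen_def geninv_def)

subsection \<open>Translation\<close>

lemma tr_OmegaTau:
  assumes t: "reduced t" and O: "\<xi> \<in> OmegaTau A" and ti: "finv t \<in> \<xi>"
  shows "fmult t ` \<xi> \<in> OmegaTau A"
proof -
  have sub: "\<xi> \<subseteq> FG" using O by (simp add: OmegaTau_iff)
  note mem = mem_tr[OF t sub]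
  have red: "\<And>w. w \<in> \<xi> \<Longrightarrow> reduced w" using OT_sub[OF O] .
  have ft: "reduced (finv t)" using finv_reduced[OF t] .
  have bk: "\<And>w X. w \<in> \<xi> \<Longrightarrow> fmult (finv t) (fmult (fmult t w) X) = fmult w X"
    using t red by (simp add: fmult_assoc cancel_left1 fmult_reduced)
  have i1: "fmult t ` \<xi> \<subseteq> FG" using t fmult_reduced by (auto simp: FG_def)
  have i2: "[] \<in> fmult t ` \<xi>" using ti t by (metis fmult_finv_right image_eqI)
  have i3: "convex (fmult t ` \<xi>)"
    unfolding convex_def
  proof (intro ballI allI)
    fix \<omega>' \<nu>' k assume a: "\<omega>' \<in> fmult t ` \<xi>" "\<nu>' \<in> fmult t ` \<xi>"
    then obtain \<omega> \<nu> where w: "\<omega> \<in> \<xi>" "\<nu> \<in> \<xi>" "\<omega>' = fmult t \<omega>" "\<nu>' = fmult t \<nu>" by auto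
    have "fmult (finv \<omega>') \<nu>' = fmult (fmult (finv \<omega>) (finv t)) (fmult t \<nu>)"
      using w(3,4) finv_fmult[OF t red[OF w(1)]] by simp
    also have "\<dots> = fmult (finv \<omega>) \<nu>"
      using w t red ft by (simp add: fmult_assoc finv_reduced cancel_left1)
    finally have e: "fmult (finv \<omega>') \<nu>' = fmult (finv \<omega>) \<nu>" .
    have "fmult \<omega> (take k (fmult (finv \<omega>) \<nu>)) \<in> \<xi>"
      using O w unfolding OmegaTau_iff convex_def by blast
    then have "fmult t (fmult \<omega> (take k (fmult (finv \<omega>) \<nu>))) \<in> fmult t ` \<xi>" by blast
    then show "fmult \<omega>' (take k (fmult (finv \<omega>') \<nu>')) \<in> fmult t ` \<xi>"
      using e w t by (simp add: fmult_assoc)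
  qed
  have i4: "\<forall>\<omega>\<in>fmult t ` \<xi>. \<forall>y z. fmult \<omega> (gen y) \<in> fmult t ` \<xi> \<and> fmult \<omega> (gen z) \<in> fmult t ` \<xi> \<longrightarrow> y = z"
  proof (intro ballI allI impI)
    fix \<omega>' y z assume a: "\<omega>' \<in> fmult t ` \<xi>" "fmult \<omega>' (gen y) \<in> fmult t ` \<xi> \<and> fmult \<omega>' (gen z) \<in> fmult t ` \<xi>"
    then obtain \<omega> where w: "\<omega> \<in> \<xi>" "\<omega>' = fmult t \<omega>" by auto
    have "fmult \<omega> (gen y) \<in> \<xi>" "fmult \<omega> (gen z) \<in> \<xi>" using a w mem bk by auto
    then show "y = z" using OT_uniq[OF O w(1)] by blast
  qed
  have i5: "\<forall>\<omega>\<in>fmult t ` \<xi>. \<forall>y. fmult \<omega> (gen y) \<in> fmult t ` \<xi> \<longrightarrow>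
           (\<forall>x. fmult \<omega> (geninv x) \<in> fmult t ` \<xi> \<longleftrightarrow> A x y)"
  proof (intro ballI allI impI)
    fix \<omega>' y x assume a: "\<omega>' \<in> fmult t ` \<xi>" "fmult \<omega>' (gen y) \<in> fmult t ` \<xi>"
    then obtain \<omega> where w: "\<omega> \<in> \<xi>" "\<omega>' = fmult t \<omega>" by auto
    have "fmult \<omega> (gen y) \<in> \<xi>" using a w mem bk by auto
    then have "fmult \<omega> (geninv x) \<in> \<xi> \<longleftrightarrow> A x y" using OT_A[OF O w(1)] by blast
    moreover have "fmult \<omega>' (geninv x) \<in> fmult t ` \<xi> \<longleftrightarrow> fmult \<omega> (geninv x) \<in> \<xi>"
      using mem bk w t red by (simp add: fmult_reduced)
    ultimately show "fmult \<omega>' (geninv x) \<in> fmult t ` \<xi> \<longleftrightarrow> A x y" by simp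
  qed
  show ?thesis using i1 i2 i3 i4 i5 by (simp add: OmegaTau_iff)
qed

lemma tr_unbounded:
  assumes t: "reduced t" and sub: "\<xi> \<subseteq> FG" and nb: "no_upper_bound \<xi>"
  shows "no_upper_bound (fmult t ` \<xi>)"
  unfolding no_upper_bound_def
proof
  assume "\<exists>u\<in>FG. \<forall>s\<in>fmult t ` \<xi>. fle s u"
  then obtain u where u: "reduced u" "\<forall>s\<in>fmult t ` \<xi>. fle s u" by (auto simp: FG_def)
  have "\<forall>s\<in>\<xi>. fle s (fmult (finv t) u)"
  proof
    fix s assume s: "s \<in> \<xi>"
    have rs: "reduced s" using s sub by (auto simp: FG_def)
    have "fle (fmult t s) u" using u s by auto
    then have "fmult (finv (fmult t s)) u \<in> FPlus" by (simp add: fle_def)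
    moreover have "finv (fmult t s) = fmult (finv s) (finv t)" using finv_fmult[OF t rs] .
    ultimately show "fle s (fmult (finv t) u)"
      by (simp add: fle_def fmult_assoc finv_reduced[OF rs])
  qed
  moreover have "fmult (finv t) u \<in> FG" using finv_reduced[OF t] fmult_reduced by (auto simp: FG_def)
  ultimately show False using nb unfolding no_upper_bound_def by blast
qed

lemma unb_OmegaT: "\<eta> \<in> OmegaTau A \<Longrightarrow> no_upper_bound \<eta> \<Longrightarrow> \<eta> \<in> OmegaT A"
  unfolding OmegaT_def by blast

lemma tr_OmegaT:
  assumes t: "reduced t" and O: "\<xi> \<in> OmegaT A" and ti: "finv t \<in> \<xi>"
  shows "fmult t ` \<xi> \<in> OmegaT A"
proof -
  have OT: "\<xi> \<in> OmegaTau A" using O by (simp add: OmegaT_def)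
  have sub: "\<xi> \<subseteq> FG" using OT by (simp add: OmegaTau_iff)
  have c1: "fmult t ` \<xi> \<in> OmegaTau A" by (rule tr_OmegaTau[OF t OT ti])
  have "\<exists>\<eta>\<in>OmegaTau A. no_upper_bound \<eta> \<and> \<eta> \<inter> F0 = fmult t ` \<xi> \<inter> F0" if F0: "finite F0" for F0
  proof -
    let ?F1 = "insert (finv t) (fmult (finv t) ` F0)"
    have "finite ?F1" using F0 by simp
    then obtain \<eta> where e: "\<eta> \<in> OmegaTau A" "no_upper_bound \<eta>" "\<eta> \<inter> ?F1 = \<xi> \<inter> ?F1"
      using O unfolding OmegaT_def by blast
    have esub: "\<eta> \<subseteq> FG" using e by (simp add: OmegaTau_iff)
    have "finv t \<in> \<eta>" using e(3) ti by blast
    then have "fmult t ` \<eta> \<in> OmegaTau A" using tr_OmegaTau[OF t e(1)] by blast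
    moreover have "no_upper_bound (fmult t ` \<eta>)" using tr_unbounded[OF t esub e(2)] .
    moreover have "fmult t ` \<eta> \<inter> F0 = fmult t ` \<xi> \<inter> F0"
    proof -
      have "w \<in> fmult t ` \<eta> \<longleftrightarrow> w \<in> fmult t ` \<xi>" if "w \<in> F0" for w
      proof -
        have "fmult (finv t) w \<in> ?F1" using that by blast
        then have "fmult (finv t) w \<in> \<eta> \<longleftrightarrow> fmult (finv t) w \<in> \<xi>" using e(3) by blast
        then show ?thesis using mem_tr[OF t esub] mem_tr[OF t sub] by simp
      qed
      then show ?thesis by blast
    qed
    ultimately show ?thesis by blast
  qed
  then show ?thesis using c1 unfolding OmegaT_def by blast
qed

subsection \<open>Local structure\<close>

lemma fmult_gen_snoc: "fmult \<omega> (gen x) = mult1 \<omega> (x, True)"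
  by (simp add: gen_def fmult_def)

lemma fmult_geninv_snoc: "fmult \<omega> (geninv x) = mult1 \<omega> (x, False)"
  by (simp add: geninv_def fmult_def)

lemma NEG1:
  assumes O: "\<xi> \<in> OmegaTau A" and w: "\<omega> \<in> \<xi>" "\<omega> \<noteq> []" "\<not> snd (last \<omega>)"
  shows "\<omega> @ [(u, False)] \<in> \<xi> \<longleftrightarrow> A u (fst (last \<omega>))"
proof -
  let ?x = "fst (last \<omega>)"
  have l: "last \<omega> = inv_letter (?x, True)" using w by (simp add: inv_letter_def prod_eq_iff)
  have "fmult \<omega> (gen ?x) = butlast \<omega>" using l w by (simp add: fmult_gen_snoc mult1_def)
  then have "fmult \<omega> (gen ?x) \<in> \<xi>" using OT_butlast[OF O w(1)] by simp
  then have "fmult \<omega> (geninv u) \<in> \<xi> \<longleftrightarrow> A u ?x" using OT_A[OF O w(1)] by blast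
  moreover have "fmult \<omega> (geninv u) = \<omega> @ [(u, False)]"
    using w by (auto simp: fmult_geninv_snoc mult1_def inv_letter_def)
  ultimately show ?thesis by simp
qed

lemma NEG:
  assumes O: "\<xi> \<in> OmegaTau A" and O': "\<xi>' \<in> OmegaTau A"
    and n: "\<nu> \<noteq> []" "\<not> snd (last \<nu>)" and eq: "\<nu> \<in> \<xi> \<longleftrightarrow> \<nu> \<in> \<xi>'"
    and q: "\<forall>a\<in>set q. \<not> snd a"
  shows "\<nu> @ q \<in> \<xi> \<longleftrightarrow> \<nu> @ q \<in> \<xi>'"
  using q
proof (induction q rule: rev_induct)
  case Nil then show ?case using eq by simp
next
  case (snoc b q)
  have ih: "\<nu> @ q \<in> \<xi> \<longleftrightarrow> \<nu> @ q \<in> \<xi>'" using snoc by simp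
  have b: "b = (fst b, False)" using snoc.prems by (simp add: prod_eq_iff)
  have ln: "\<not> snd (last (\<nu> @ q))" using n snoc.prems by (cases q rule: rev_cases) auto
  show ?case
  proof (cases "\<nu> @ q \<in> \<xi>")
    case True
    then have T': "\<nu> @ q \<in> \<xi>'" using ih by simp
    show ?thesis using NEG1[OF O True _ ln, of "fst b"] NEG1[OF O' T' _ ln, of "fst b"] n b
      by (metis append_assoc append_is_Nil_conv)
  next
    case False
    then have "\<nu> @ q \<notin> \<xi>'" using ih by simp
    then show ?thesis using False OT_prefix_append[OF O, of "\<nu> @ q" "[b]"]
        OT_prefix_append[OF O', of "\<nu> @ q" "[b]"] by auto
  qed
qed

definition posw :: "'g word \<Rightarrow> bool" where "posw p \<longleftrightarrow> (\<forall>a\<in>set p. snd a)"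
definition negw :: "'g word \<Rightarrow> bool" where "negw q \<longleftrightarrow> (\<forall>a\<in>set q. \<not> snd a)"

lemma OT_shape:
  assumes O: "\<xi> \<in> OmegaTau A" shows "w \<in> \<xi> \<Longrightarrow> \<exists>p q. w = p @ q \<and> posw p \<and> negw q"
proof (induction w rule: rev_induct)
  case Nil then show ?case by (auto simp: posw_def negw_def)
next
  case (snoc a w)
  have "w \<in> \<xi>" using OT_prefix_append[OF O snoc.prems] .
  then obtain p q where pq: "w = p @ q" "posw p" "negw q" using snoc.IH by blast
  show ?case
  proof (cases "snd a")
    case False
    then show ?thesis using pq by (intro exI[of _ p] exI[of _ "q @ [a]"]) (auto simp: negw_def)
  next
    case True
    show ?thesis
    proof (cases "q = []")
      case True
      then show ?thesis using pq \<open>snd a\<close> by (intro exI[of _ "p @ [a]"] exI[of _ "[]"]) (auto simp: posw_def negw_def)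
    next
      case False
      let ?x = "fst (last w)"
      have lw: "last w = (?x, False)" using False pq by (auto simp: negw_def prod_eq_iff)
      have wne: "w \<noteq> []" using False pq by simp
      have red: "reduced (w @ [a])" using OT_sub[OF O snoc.prems] .
      then have "last w \<noteq> inv_letter a" using wne by (simp add: reduced_snoc)
      then have xa: "?x \<noteq> fst a" using lw True by (auto simp: inv_letter_def prod_eq_iff)
      have "fmult w (gen ?x) = butlast w" using lw wne by (simp add: fmult_gen_snoc mult1_def inv_letter_def)
      then have m1: "fmult w (gen ?x) \<in> \<xi>" using OT_butlast[OF O \<open>w \<in> \<xi>\<close>] by simp
      have "fmult w (gen (fst a)) = w @ [a]" using lw True xa
        by (auto simp: fmult_gen_snoc mult1_def inv_letter_def prod_eq_iff)
      then have m2: "fmult w (gen (fst a)) \<in> \<xi>" using snoc.prems by simp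
      have "?x = fst a" using OT_uniq[OF O \<open>w \<in> \<xi>\<close> m1 m2] .
      then show ?thesis using xa by simp
    qed
  qed
qed

definition Dk :: "nat \<Rightarrow> 'g word set" where
  "Dk k = {p @ q | p q. posw p \<and> negw q \<and> (length p < k \<or> (q = [] \<and> length p \<le> k))}"




lemma Dk_agree_F:
  assumes O: "\<xi> \<in> OmegaTau A" and O': "\<xi>' \<in> OmegaTau A" and F: "\<forall>w\<in>F. length w < K"
    and ag: "\<xi> \<inter> Dk K = \<xi>' \<inter> Dk K"
  shows "\<xi> \<inter> F = \<xi>' \<inter> F"
proof -
  have inD: "w \<in> Dk K" if a: "w \<in> \<zeta>" "\<zeta> \<in> OmegaTau A" "w \<in> F" for w \<zeta>
  proof -
    obtain p q where pq: "w = p @ q" "posw p" "negw q" using OT_shape[OF a(2) a(1)] by blast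
    have "length p < K" using pq F a(3) by auto
    then show ?thesis unfolding Dk_def using pq by blast
  qed
  show ?thesis using inD[OF _ O] inD[OF _ O'] ag by blast
qed

lemma Dk_0: "Dk 0 = {[]}"
proof -
  have "[] \<in> Dk 0" unfolding Dk_def by (intro CollectI exI[of _ "[]"]) (simp add: posw_def negw_def)
  moreover have "w = []" if "w \<in> Dk 0" for w using that unfolding Dk_def by auto
  ultimately show ?thesis by blast
qed

lemma gen_mem:
  assumes O: "\<xi> \<in> OmegaTau A" and y: "gen y \<in> \<xi>"
  shows "gen x \<in> \<xi> \<longleftrightarrow> x = y"
  using OT_uniq[OF O OT_Nil[OF O], of x y] y by auto

lemma geninv_mem:
  assumes O: "\<xi> \<in> OmegaTau A" and y: "gen y \<in> \<xi>"
  shows "geninv x \<in> \<xi> \<longleftrightarrow> A x y"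
  using OT_A[OF O OT_Nil[OF O], of y x] y by simp

lemma bad2:
  assumes O: "\<xi> \<in> OmegaTau A" and z: "geninv z \<in> \<xi>" and m: "[(z, False), (x, True)] \<in> \<xi>"
  shows "x = z"
proof (rule ccontr)
  assume xz: "x \<noteq> z"
  have "fmult (geninv z) (gen z) = []" by (simp add: geninv_def fmult_gen_snoc mult1_def inv_letter_def)
  then have m1: "fmult (geninv z) (gen z) \<in> \<xi>" using OT_Nil[OF O] by simp
  have "fmult (geninv z) (gen x) = [(z, False), (x, True)]" using xz
    by (simp add: geninv_def fmult_gen_snoc mult1_def inv_letter_def)
  then have m2: "fmult (geninv z) (gen x) \<in> \<xi>" using m by simp
  show False using OT_uniq[OF O z m1 m2] xz by simp
qed



lemma step1:
  assumes O: "\<xi> \<in> OmegaTau A" and O': "\<xi>' \<in> OmegaTau A"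
    and z: "geninv z \<in> \<xi>" and z': "geninv z \<in> \<xi>'"
    and ag: "\<xi> \<inter> Dk k = \<xi>' \<inter> Dk k"
    and wD: "w \<in> Dk (Suc k)" and wm: "w \<in> fmult (gen z) ` \<xi>"
  shows "w \<in> fmult (gen z) ` \<xi>'"
proof -
  have sub: "\<xi> \<subseteq> FG" using O by (simp add: OmegaTau_iff)
  have sub': "\<xi>' \<subseteq> FG" using O' by (simp add: OmegaTau_iff)
  have mt: "w \<in> fmult (gen z) ` \<xi> \<longleftrightarrow> reduced w \<and> fmult (geninv z) w \<in> \<xi>"
    using mem_tr[OF reduced_gen(1) sub, of w] by simp
  have mt': "w \<in> fmult (gen z) ` \<xi>' \<longleftrightarrow> reduced w \<and> fmult (geninv z) w \<in> \<xi>'"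
    using mem_tr[OF reduced_gen(1) sub', of w] by simp
  have rw: "reduced w" and m: "fmult (geninv z) w \<in> \<xi>" using wm mt by blast+
  have fs: "fmult (geninv z) w = (if w \<noteq> [] \<and> hd w = (z, True) then tl w else (z, False) # w)"
    using fmult_single[OF rw, of "(z, False)"] by (simp add: geninv_def inv_letter_def)
  obtain p q where pq: "w = p @ q" "posw p" "negw q" "length p < Suc k \<or> (q = [] \<and> length p \<le> Suc k)"
    using wD unfolding Dk_def by blast
  have goal: "fmult (geninv z) w \<in> \<xi>' \<Longrightarrow> w \<in> fmult (gen z) ` \<xi>'"
    using mt' rw by blast
  show ?thesis
  proof (cases p)
    case Nil
    then have hq: "w = q" using pq by simp
    have nh: "\<not> (w \<noteq> [] \<and> hd w = (z, True))" using hq pq(3) by (cases q) (auto simp: negw_def)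
    have "fmult (geninv z) w = (z, False) # w" using fs nh by (simp only: if_not_P if_False)
    then have e: "fmult (geninv z) w = [(z, False)] @ q" using hq by simp
    have "[(z, False)] @ q \<in> \<xi> \<longleftrightarrow> [(z, False)] @ q \<in> \<xi>'"
      using NEG[OF O O', of "[(z, False)]" q] z z' pq(3) by (simp add: geninv_def negw_def)
    then show ?thesis using goal m e by simp
  next
    case (Cons a p')
    have a: "snd a" using pq(2) Cons by (simp add: posw_def)
    show ?thesis
    proof (cases "fst a = z")
      case True
      then have "hd w = (z, True)" using Cons pq a by (simp add: prod_eq_iff)
      then have e: "fmult (geninv z) w = p' @ q" using fs Cons pq by simp
      have "posw p'" using pq(2) Cons by (simp add: posw_def)
      moreover have "length p' < k \<or> (q = [] \<and> length p' \<le> k)" using pq(4) Cons by auto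
      ultimately have "p' @ q \<in> Dk k" unfolding Dk_def using pq(3) by blast
      moreover have "p' @ q \<in> \<xi>" using m e by simp
      ultimately have "p' @ q \<in> \<xi> \<inter> Dk k" by (rule IntI[rotated])
      then have "p' @ q \<in> \<xi>'" unfolding ag by (rule IntD1)
      then show ?thesis using goal e by simp
    next
      case False
      then have "hd w \<noteq> (z, True)" using Cons pq by auto
      then have e: "fmult (geninv z) w = (z, False) # w" using fs by auto
      have "take 2 ((z, False) # w) = [(z, False), (fst a, True)]" using Cons pq a by (simp add: prod_eq_iff)
      then have "[(z, False), (fst a, True)] \<in> \<xi>" using OT_prefix[OF O, of "(z, False) # w" 2] m e by simp
      then show ?thesis using bad2[OF O z] False by blast
    qed
  qed
qed

lemma step2:
  assumes O: "\<xi> \<in> OmegaTau A" and O': "\<xi>' \<in> OmegaTau A"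
    and z: "geninv z \<in> \<xi>" and z': "geninv z \<in> \<xi>'"
    and ag: "\<xi> \<inter> Dk k = \<xi>' \<inter> Dk k"
  shows "fmult (gen z) ` \<xi> \<inter> Dk (Suc k) = fmult (gen z) ` \<xi>' \<inter> Dk (Suc k)"
proof (rule set_eqI)
  fix w
  show "w \<in> fmult (gen z) ` \<xi> \<inter> Dk (Suc k) \<longleftrightarrow> w \<in> fmult (gen z) ` \<xi>' \<inter> Dk (Suc k)"
    using step1[OF O O' z z' ag, of w] step1[OF O' O z' z ag[symmetric], of w] by blast
qed



lemma psi_Delta:
  assumes O: "\<xi> \<in> OmegaTau A" and y: "gen y \<in> \<xi>"
  shows "psi A g \<xi> = g y"
proof -
  have s: "sigma1 \<xi> = Some y"
    unfolding sigma1_def using y gen_mem[OF O y] by (auto intro: the_equality)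
  have R: "R_e \<xi> = {x. A x y}" unfolding R_e_def using geninv_mem[OF O y] by auto
  have "hat A g (Some y) {x. A x y} = g y"
    unfolding hat_def
  proof (rule the_equality)
    show "\<exists>F0 N. finite F0 \<and> finite N \<and>
      (\<forall>j. (case Some y of Some i \<Rightarrow> j = i | None \<Rightarrow> j \<notin> N)
            \<and> (\<forall>i\<in>F0. A i j \<longleftrightarrow> i \<in> {x. A x y}) \<longrightarrow> g j = g y)"
      by (intro exI[of _ "{}"]) auto
  next
    fix v assume "\<exists>F0 N. finite F0 \<and> finite N \<and>
      (\<forall>j. (case Some y of Some i \<Rightarrow> j = i | None \<Rightarrow> j \<notin> N)
            \<and> (\<forall>i\<in>F0. A i j \<longleftrightarrow> i \<in> {x. A x y}) \<longrightarrow> g j = v)"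
    then show "v = g y" by auto
  qed
  then show ?thesis unfolding psi_def using s R by simp
qed



subsection \<open>Closedness\<close>

lemma closed_OmegaTau:
  assumes "\<xi> \<notin> OmegaTau A"
  shows "\<exists>F0. finite F0 \<and> (\<forall>\<eta>. \<eta> \<inter> F0 = \<xi> \<inter> F0 \<longrightarrow> \<eta> \<notin> OmegaTau A)"
proof -
  consider (a) "\<not> \<xi> \<subseteq> FG" | (b) "[] \<notin> \<xi>" | (c) "\<not> convex \<xi>"
    | (d) "\<not> (\<forall>\<omega>\<in>\<xi>. \<forall>y z. fmult \<omega> (gen y) \<in> \<xi> \<and> fmult \<omega> (gen z) \<in> \<xi> \<longrightarrow> y = z)"
    | (e) "\<not> (\<forall>\<omega>\<in>\<xi>. \<forall>y. fmult \<omega> (gen y) \<in> \<xi> \<longrightarrow> (\<forall>x. fmult \<omega> (geninv x) \<in> \<xi> \<longleftrightarrow> A x y))"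
    using assms unfolding OmegaTau_iff by blast
  then show ?thesis
  proof cases
    case a
    then obtain w where "w \<in> \<xi>" "w \<notin> FG" by blast
    then show ?thesis by (intro exI[of _ "{w}"]) (auto simp: OmegaTau_iff)
  next
    case b
    then show ?thesis by (intro exI[of _ "{[]}"]) (auto simp: OmegaTau_iff)
  next
    case c
    then obtain \<omega> \<nu> k where w: "\<omega> \<in> \<xi>" "\<nu> \<in> \<xi>" "fmult \<omega> (take k (fmult (finv \<omega>) \<nu>)) \<notin> \<xi>"
      unfolding convex_def by blast
    show ?thesis
    proof (intro exI[of _ "{\<omega>, \<nu>, fmult \<omega> (take k (fmult (finv \<omega>) \<nu>))}"] conjI allI impI)
      fix \<eta> assume "\<eta> \<inter> {\<omega>, \<nu>, fmult \<omega> (take k (fmult (finv \<omega>) \<nu>))} = \<xi> \<inter> {\<omega>, \<nu>, fmult \<omega> (take k (fmult (finv \<omega>) \<nu>))}"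
      then have "\<omega> \<in> \<eta>" "\<nu> \<in> \<eta>" "fmult \<omega> (take k (fmult (finv \<omega>) \<nu>)) \<notin> \<eta>" using w by blast+
      then have "\<not> convex \<eta>" unfolding convex_def by blast
      then show "\<eta> \<notin> OmegaTau A" by (simp add: OmegaTau_iff)
    qed simp
  next
    case d
    then obtain \<omega> y z where w: "\<omega> \<in> \<xi>" "fmult \<omega> (gen y) \<in> \<xi>" "fmult \<omega> (gen z) \<in> \<xi>" "y \<noteq> z" by blast
    show ?thesis
    proof (intro exI[of _ "{\<omega>, fmult \<omega> (gen y), fmult \<omega> (gen z)}"] conjI allI impI)
      fix \<eta> assume "\<eta> \<inter> {\<omega>, fmult \<omega> (gen y), fmult \<omega> (gen z)} = \<xi> \<inter> {\<omega>, fmult \<omega> (gen y), fmult \<omega> (gen z)}"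
      then have "\<omega> \<in> \<eta>" "fmult \<omega> (gen y) \<in> \<eta>" "fmult \<omega> (gen z) \<in> \<eta>" using w by blast+
      then show "\<eta> \<notin> OmegaTau A" using w(4) OT_uniq by metis
    qed simp
  next
    case e
    then obtain \<omega> y x where w: "\<omega> \<in> \<xi>" "fmult \<omega> (gen y) \<in> \<xi>" "\<not> (fmult \<omega> (geninv x) \<in> \<xi> \<longleftrightarrow> A x y)" by blast
    show ?thesis
    proof (intro exI[of _ "{\<omega>, fmult \<omega> (gen y), fmult \<omega> (geninv x)}"] conjI allI impI)
      fix \<eta> assume "\<eta> \<inter> {\<omega>, fmult \<omega> (gen y), fmult \<omega> (geninv x)} = \<xi> \<inter> {\<omega>, fmult \<omega> (gen y), fmult \<omega> (geninv x)}"
      then have "\<omega> \<in> \<eta>" "fmult \<omega> (gen y) \<in> \<eta>" "fmult \<omega> (geninv x) \<in> \<eta> \<longleftrightarrow> fmult \<omega> (geninv x) \<in> \<xi>" using w by blast+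
      then show "\<eta> \<notin> OmegaTau A" using w(3) OT_A by metis
    qed simp
  qed
qed

lemma Delta_OT: "\<eta> \<in> Delta A t \<Longrightarrow> \<eta> \<in> OmegaTau A"
  by (simp add: Delta_def OmegaT_def)

lemma closed_Delta:
  assumes "\<xi> \<notin> Delta A (gen z)"
  shows "\<exists>F0. finite F0 \<and> (\<forall>\<eta>. \<eta> \<inter> F0 = \<xi> \<inter> F0 \<longrightarrow> \<eta> \<notin> Delta A (gen z))"
proof (cases "gen z \<in> \<xi>")
  case False
  show ?thesis
  proof (intro exI[of _ "{gen z}"] conjI allI impI)
    fix \<eta> assume "\<eta> \<inter> {gen z} = \<xi> \<inter> {gen z}"
    then have "gen z \<notin> \<eta>" using False by blast
    then show "\<eta> \<notin> Delta A (gen z)" by (simp add: Delta_def)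
  qed simp
next
  case True
  then have n: "\<xi> \<notin> OmegaT A" using assms by (simp add: Delta_def)
  show ?thesis
  proof (cases "\<xi> \<in> OmegaTau A")
    case False
    then obtain F0 where F0: "finite F0" "\<And>\<eta>. \<eta> \<inter> F0 = \<xi> \<inter> F0 \<Longrightarrow> \<eta> \<notin> OmegaTau A"
      using closed_OmegaTau[of \<xi> A] by blast
    show ?thesis
    proof (intro exI[of _ F0] conjI allI impI)
      fix \<eta> assume "\<eta> \<inter> F0 = \<xi> \<inter> F0"
      then have "\<eta> \<notin> OmegaTau A" by (rule F0(2))
      then show "\<eta> \<notin> Delta A (gen z)" using Delta_OT by blast
    qed (rule F0(1))
  next
    case True
    then obtain F0 where F0: "finite F0" "\<not> (\<exists>\<eta>\<in>OmegaTau A. no_upper_bound \<eta> \<and> \<eta> \<inter> F0 = \<xi> \<inter> F0)"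
      using n unfolding OmegaT_def by blast
    show ?thesis
    proof (intro exI[of _ F0] conjI allI impI)
      fix \<eta> assume e: "\<eta> \<inter> F0 = \<xi> \<inter> F0"
      show "\<eta> \<notin> Delta A (gen z)"
      proof
        assume "\<eta> \<in> Delta A (gen z)"
        then have "\<eta> \<in> OmegaT A" by (simp add: Delta_def)
        then obtain \<eta>' where "\<eta>' \<in> OmegaTau A" "no_upper_bound \<eta>'" "\<eta>' \<inter> F0 = \<eta> \<inter> F0"
          using F0(1) unfolding OmegaT_def by blast
        then show False using F0(2) e by auto
      qed
    qed (rule F0(1))
  qed
qed





theorem lemma4p11:
  fixes A :: "'g \<Rightarrow> 'g \<Rightarrow> bool"
    and f :: "'g \<Rightarrow> 'g word set \<Rightarrow> int"
  assumes no_zero_rows: "\<forall>i. \<exists>j. A i j"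
    and f_dsum: "in_dsum A f"
    and L_in: "\<exists>g\<in>RingA A. \<forall>\<xi>\<in>OmegaT A. L_alpha A f \<xi> = psi A g \<xi>"
  shows "in_image_j A f"
proof -
  define S where "S = dsum_support A f"
  have fS: "finite S" using f_dsum by (simp add: in_dsum_def S_def)
  have cont: "\<And>x. cont_Z (Delta A (gen x)) (f x)" using f_dsum by (simp add: in_dsum_def)
  obtain g where gL: "\<forall>\<xi>\<in>OmegaT A. L_alpha A f \<xi> = psi A g \<xi>" using L_in by blast
  have zero: "\<And>y \<xi>. y \<notin> S \<Longrightarrow> \<xi> \<in> Delta A (gen y) \<Longrightarrow> f y \<xi> = 0"
    by (auto simp: S_def dsum_support_def)
  have DOT: "\<And>y \<xi>. \<xi> \<in> Delta A (gen y) \<Longrightarrow> \<xi> \<in> OmegaTau A"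
    by (simp add: Delta_def OmegaT_def)
  have DOT2: "\<And>y \<xi>. \<xi> \<in> Delta A (gen y) \<Longrightarrow> \<xi> \<in> OmegaT A"
    by (simp add: Delta_def)
  have Dgen: "\<And>y \<xi>. \<xi> \<in> Delta A (gen y) \<Longrightarrow> gen y \<in> \<xi>"
    by (simp add: Delta_def)
  have unif: "\<exists>K. \<forall>K'\<ge>K. \<forall>\<xi>\<in>Delta A (gen z). \<forall>\<xi>'\<in>Delta A (gen z).
      \<xi> \<inter> Dk K' = \<xi>' \<inter> Dk K' \<longrightarrow> f z \<xi> = f z \<xi>'" for z
  proof -
    have cl: "closed_cyl (\<lambda>\<xi>. \<xi> \<in> Delta A (gen z))"
      unfolding closed_cyl_def by (intro allI impI) (rule closed_Delta)
    obtain F where F: "finite F"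
      "\<forall>\<xi>\<in>Delta A (gen z). \<forall>\<xi>'\<in>Delta A (gen z). \<xi> \<inter> F = \<xi>' \<inter> F \<longrightarrow> f z \<xi> = f z \<xi>'"
      using compact_unif[OF cl cont] by blast
    define K where "K = Suc (Max (insert 0 (length ` F)))"
    have KF: "\<forall>w\<in>F. length w < K"
      using F(1) unfolding K_def by (simp add: le_imp_less_Suc)
    show ?thesis
    proof (intro exI[of _ K] allI impI ballI)
      fix K' \<xi> \<xi>' assume a: "K \<le> K'" "\<xi> \<in> Delta A (gen z)" "\<xi>' \<in> Delta A (gen z)"
        "\<xi> \<inter> Dk K' = \<xi>' \<inter> Dk K'"
      have "\<forall>w\<in>F. length w < K'" using KF a(1) by auto
      then have "\<xi> \<inter> F = \<xi>' \<inter> F" using Dk_agree_F[OF DOT[OF a(2)] DOT[OF a(3)] _ a(4)] by blast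
      then show "f z \<xi> = f z \<xi>'" using F(2) a by blast
    qed
  qed
  obtain Kf where Kf: "\<And>z K'. Kf z \<le> K' \<Longrightarrow> \<forall>\<xi>\<in>Delta A (gen z). \<forall>\<xi>'\<in>Delta A (gen z).
      \<xi> \<inter> Dk K' = \<xi>' \<inter> Dk K' \<longrightarrow> f z \<xi> = f z \<xi>'"
    using unif by metis
  define K0 where "K0 = Max (insert 0 (Kf ` S))"
  define P where "P k \<longleftrightarrow> (\<forall>y. \<forall>\<xi>\<in>Delta A (gen y). \<forall>\<xi>'\<in>Delta A (gen y).
      \<xi> \<inter> Dk k = \<xi>' \<inter> Dk k \<longrightarrow> f y \<xi> = f y \<xi>')" for k
  have PK0: "P K0"
    unfolding P_def
  proof (intro allI ballI impI)
    fix y \<xi> \<xi>' assume a: "\<xi> \<in> Delta A (gen y)" "\<xi>' \<in> Delta A (gen y)" "\<xi> \<inter> Dk K0 = \<xi>' \<inter> Dk K0"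
    show "f y \<xi> = f y \<xi>'"
    proof (cases "y \<in> S")
      case True
      then have "Kf y \<le> K0" unfolding K0_def using fS by simp
      then show ?thesis using Kf a by blast
    next
      case False
      then show ?thesis using zero a by simp
    qed
  qed
  have step: "P k" if PS: "P (Suc k)" for k
    unfolding P_def
  proof (intro allI ballI impI)
    fix y \<xi> \<xi>' assume a: "\<xi> \<in> Delta A (gen y)" "\<xi>' \<in> Delta A (gen y)" "\<xi> \<inter> Dk k = \<xi>' \<inter> Dk k"
    have O: "\<xi> \<in> OmegaTau A" and O': "\<xi>' \<in> OmegaTau A" using DOT a by blast+
    have OT: "\<xi> \<in> OmegaT A" and OT': "\<xi>' \<in> OmegaT A" using DOT2 a by blast+
    have gy: "gen y \<in> \<xi>" and gy': "gen y \<in> \<xi>'" using Dgen a by blast+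
    have Lq: "L_alpha A f \<xi> = L_alpha A f \<xi>'"
      using gL OT OT' psi_Delta[OF O gy] psi_Delta[OF O' gy'] by simp
    have alpha_eq: "alpha_inv A f x \<xi> = alpha_inv A f x \<xi>'" for x
    proof (cases "A x y")
      case False
      then have "\<xi> \<notin> Delta A (geninv x)" "\<xi>' \<notin> Delta A (geninv x)"
        using geninv_mem[OF O gy] geninv_mem[OF O' gy'] by (auto simp: Delta_def)
      then show ?thesis by (simp add: alpha_inv_def)
    next
      case True
      then have gi: "geninv x \<in> \<xi>" "geninv x \<in> \<xi>'"
        using geninv_mem[OF O gy] geninv_mem[OF O' gy'] by auto
      then have inD: "\<xi> \<in> Delta A (geninv x)" "\<xi>' \<in> Delta A (geninv x)"
        using OT OT' by (auto simp: Delta_def)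
      have t1: "fmult (gen x) ` \<xi> \<in> Delta A (gen x)"
      proof -
        have "fmult (gen x) ` \<xi> \<in> OmegaT A" using tr_OmegaT[OF reduced_gen(1) OT] gi by simp
        moreover have "gen x \<in> fmult (gen x) ` \<xi>" using OT_Nil[OF O]
          by (metis fmult_Nil_right image_eqI)
        ultimately show ?thesis by (simp add: Delta_def)
      qed
      have t2: "fmult (gen x) ` \<xi>' \<in> Delta A (gen x)"
      proof -
        have "fmult (gen x) ` \<xi>' \<in> OmegaT A" using tr_OmegaT[OF reduced_gen(1) OT'] gi by simp
        moreover have "gen x \<in> fmult (gen x) ` \<xi>'" using OT_Nil[OF O']
          by (metis fmult_Nil_right image_eqI)
        ultimately show ?thesis by (simp add: Delta_def)
      qed
      have "fmult (gen x) ` \<xi> \<inter> Dk (Suc k) = fmult (gen x) ` \<xi>' \<inter> Dk (Suc k)"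
        using step2[OF O O' gi a(3)] .
      then have "f x (fmult (gen x) ` \<xi>) = f x (fmult (gen x) ` \<xi>')"
        using PS t1 t2 unfolding P_def by blast
      then show ?thesis using inD by (simp add: alpha_inv_def)
    qed
    have ext_eq: "ext0 A f x \<zeta> = (if x = y then f y \<zeta> else 0)"
      if "\<zeta> \<in> Delta A (gen y)" for x \<zeta>
    proof -
      have "\<zeta> \<in> Delta A (gen x) \<longleftrightarrow> x = y"
        using gen_mem[OF DOT[OF that] Dgen[OF that]] that by (auto simp: Delta_def)
      then show ?thesis by (auto simp: ext0_def)
    qed
    have Ls: "L_alpha A f \<zeta> = (if y \<in> S then f y \<zeta> else 0) - (\<Sum>x\<in>S. alpha_inv A f x \<zeta>)"
      if "\<zeta> \<in> Delta A (gen y)" for \<zeta>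
    proof -
      have "L_alpha A f \<zeta> = (\<Sum>x\<in>S. ext0 A f x \<zeta>) - (\<Sum>x\<in>S. alpha_inv A f x \<zeta>)"
        unfolding L_alpha_def S_def by (simp add: sum_subtractf)
      also have "(\<Sum>x\<in>S. ext0 A f x \<zeta>) = (\<Sum>x\<in>S. (if x = y then f y \<zeta> else 0))"
        using ext_eq[OF that] by simp
      also have "\<dots> = (if y \<in> S then f y \<zeta> else 0)" using fS by simp
      finally show ?thesis .
    qed
    show "f y \<xi> = f y \<xi>'"
    proof (cases "y \<in> S")
      case True
      then show ?thesis using Lq Ls[OF a(1)] Ls[OF a(2)] alpha_eq by simp
    next
      case False
      then show ?thesis using zero a by simp
    qed
  qed
  have Pd: "P (K0 - d)" for d
  proof (induction d)
    case 0 then show ?case using PK0 by simp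
  next
    case (Suc d)
    show ?case
    proof (cases "K0 - d = 0")
      case True
      then show ?thesis using Suc by simp
    next
      case False
      then have "K0 - d = Suc (K0 - Suc d)" by simp
      then show ?thesis using Suc step by metis
    qed
  qed
  have P0: "P 0" using Pd[of K0] by simp
  have const: "f y \<xi> = f y \<xi>'" if "\<xi> \<in> Delta A (gen y)" "\<xi>' \<in> Delta A (gen y)" for y \<xi> \<xi>'
  proof -
    have "\<xi> \<inter> Dk 0 = \<xi>' \<inter> Dk 0"
      using OT_Nil[OF DOT[OF that(1)]] OT_Nil[OF DOT[OF that(2)]] by (simp add: Dk_0)
    then show ?thesis using P0 that unfolding P_def by blast
  qed
  define n where "n y = (if Delta A (gen y) = {} then 0 else f y (SOME \<xi>. \<xi> \<in> Delta A (gen y)))" for y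
  have "{x. n x \<noteq> 0} \<subseteq> S"
  proof
    fix x assume "x \<in> {x. n x \<noteq> 0}"
    then have "Delta A (gen x) \<noteq> {}" "f x (SOME \<xi>. \<xi> \<in> Delta A (gen x)) \<noteq> 0" by (auto simp: n_def split: if_splits)
    moreover have "(SOME \<xi>. \<xi> \<in> Delta A (gen x)) \<in> Delta A (gen x)" using calculation(1) by (meson ex_in_conv someI_ex)
    ultimately show "x \<in> S" unfolding S_def dsum_support_def by blast
  qed
  then have fin: "finite {x. n x \<noteq> 0}" using fS finite_subset by blast
  have "\<forall>x. \<forall>\<xi>\<in>Delta A (gen x). f x \<xi> = n x"
  proof (intro allI ballI)
    fix x \<xi> assume a: "\<xi> \<in> Delta A (gen x)"
    then have ne: "Delta A (gen x) \<noteq> {}" by blast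
    then have "(SOME \<xi>. \<xi> \<in> Delta A (gen x)) \<in> Delta A (gen x)" by (meson ex_in_conv someI_ex)
    then show "f x \<xi> = n x" using const[OF a] ne by (simp add: n_def)
  qed
  then show ?thesis unfolding in_image_j_def using fin by blast
qed



end
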